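(* Let $M=(v_1,\dots,v_n)$ be a finite list of nonzero vectors generating $\mathbb{F}_2^3$ which is generic, i.e. $\sum_{i=1}^n v_i\ne\mathbf{0}$. Let $\lambda_u=n-\sum_{i=1}^n(-1)^{u\cdot v_i}$ for $u\in\mathbb{F}_2^3\setminus\{0\}$ and let $d_1\le\cdots\le d_7$ be the numbers $v_2(\lambda_u)$, $u\ne 0$, in increasing order. Then $d_1=d_2=d_3=d_4=1$ and $d_5,d_6,d_7>1$.
   Context: The $\lambda_u$ are the nonzero eigenvalues of the Laplacian of the Cayley graph $G(\mathbb{F}_2^3,M)$ (the matrix indexed by $\mathbb{F}_2^3$ with diagonal entries $n$ and $(u,w)$-entry $-\#\{i:u+v_i=w\}$ for $u\ne w$). $v_2$ is the $2$-adic valuation. *)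

theory Defs
  imports "HOL-Analysis.Analysis" "HOL-Library.Z2" "HOL-Library.Multiset"
          "HOL-Computational_Algebra.Factorial_Ring"
begin

definition dotF2 :: "bit^3 \<Rightarrow> bit^3 \<Rightarrow> bit" where
  "dotF2 u v = (\<Sum>i\<in>UNIV. u $ i * v $ i)"

definition generatesF2 :: "(bit^3) list \<Rightarrow> bool" where
  "generatesF2 M \<longleftrightarrow> (\<forall>w :: bit^3. \<exists>c :: nat \<Rightarrow> bit.
      w = (\<Sum>i<length M. c i *s (M ! i)))"

definition lam :: "(bit^3) list \<Rightarrow> bit^3 \<Rightarrow> int" where
  "lam M u = int (length M) - (\<Sum>v\<leftarrow>M. (if dotF2 u v = 0 then 1 else -1))"

text \<open>The 2-adic valuations v_2(lambda_u), u nonzero, sorted increasingly: d_1,...,d_7 are entries 0..6.\<close>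
definition dseq :: "(bit^3) list \<Rightarrow> nat list" where
  "dseq M = sorted_list_of_multiset
      (image_mset (\<lambda>u. multiplicity (2::int) (lam M u)) (mset_set (UNIV - {0 :: bit^3})))"

end

theory Submission
  imports Defs
begin

lemma dot_add: "dotF2 u (v + w) = dotF2 u v + dotF2 u w"
  unfolding dotF2_def by (simp only: vector_add_component distrib_left sum.distrib)

lemma dot_scale: "dotF2 u (c *s v) = c * dotF2 u v"
  unfolding dotF2_def by (simp only: vector_smult_component sum_distrib_left mult.left_commute)

lemma dot_zero: "dotF2 u 0 = 0"
  unfolding dotF2_def by simp

lemma dot_sum: "dotF2 u (\<Sum>i<(n::nat). f i) = (\<Sum>i<n. dotF2 u (f i))"
  by (induction n) (simp_all add: dot_zero dot_add)

lemma dot_axis: "dotF2 u (axis j 1) = u $ j"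
  unfolding dotF2_def axis_def by (simp add: if_distrib cong: if_cong)

definition NN :: "(bit^3) list \<Rightarrow> bit^3 \<Rightarrow> nat" where
  "NN M u = length (filter (\<lambda>v. dotF2 u v = 1) M)"

lemma lam_NN: "lam M u = 2 * int (NN M u)"
  unfolding lam_def NN_def by (induction M) auto

lemma dot_sum_list: "dotF2 u (sum_list M) = (if odd (NN M u) then 1 else 0)"
  unfolding NN_def by (induction M) (auto simp: dot_zero dot_add)

lemma NN_pos:
  assumes "u \<noteq> 0" "generatesF2 M"
  shows "NN M u > 0"
proof (rule ccontr)
  assume "\<not> NN M u > 0"
  hence z: "\<forall>v\<in>set M. dotF2 u v = 0" unfolding NN_def by (auto simp: filter_empty_conv)
  obtain j where j: "u $ j \<noteq> 0" using assms(1) by (metis vec_eq_iff zero_index)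
  obtain c where c: "axis j 1 = (\<Sum>i<length M. c i *s (M ! i))"
    using assms(2) unfolding generatesF2_def by blast
  have "dotF2 u (axis j 1) = (\<Sum>i<length M. c i * dotF2 u (M ! i))"
    unfolding c dot_sum dot_scale ..
  also have "\<dots> = 0" using z by (auto intro!: sum.neutral)
  finally show False using j by (simp add: dot_axis)
qed

lemma sort_lemma:
  fixes A :: "nat multiset"
  assumes "size A = 7" "filter_mset (\<lambda>x. x \<le> 1) A = replicate_mset 4 1"
  shows "sorted_list_of_multiset A ! 0 = 1 \<and> sorted_list_of_multiset A ! 1 = 1 \<and>
         sorted_list_of_multiset A ! 2 = 1 \<and> sorted_list_of_multiset A ! 3 = 1 \<and>
         sorted_list_of_multiset A ! 4 > 1 \<and> sorted_list_of_multiset A ! 5 > 1 \<and>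
         sorted_list_of_multiset A ! 6 > 1"
proof -
  define B where "B = filter_mset (\<lambda>x. \<not> x \<le> 1) A"
  define ys where "ys = sorted_list_of_multiset B"
  have AB: "A = replicate_mset 4 1 + B"
    using multiset_partition[of A "\<lambda>x. x \<le> 1"] unfolding assms(2) B_def .
  have sB: "size B = 3" using assms(1) AB by simp
  have mys: "mset ys = B" unfolding ys_def by simp
  have lys: "length ys = 3" using sB mys by (metis size_mset)
  have gt: "\<forall>y\<in>set ys. y > 1" using mys unfolding B_def
    by (metis (mono_tags, lifting) linorder_not_le mset_filter set_mset_mset filter_mset_eq_conv)
  have sys: "sorted ys" unfolding ys_def by simp
  define xs where "xs = replicate 4 (1::nat) @ ys"
  have "mset xs = A" unfolding xs_def AB using mys by simp
  moreover have "sorted xs" unfolding xs_def using sys gt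
    by (auto simp: sorted_append)
  ultimately have "sorted_list_of_multiset A = xs"
    by (metis properties_for_sort sorted_list_of_multiset_mset)
  moreover have "ys ! 0 > 1" "ys ! 1 > 1" "ys ! 2 > 1" using gt lys by auto
  ultimately show ?thesis unfolding xs_def by (simp add: nth_append)
qed

lemma UNIV_bit: "(UNIV::bit set) = {0,1}" using bit_not_zero_iff by blast

instance bit :: finite
  by standard (simp add: UNIV_bit)

lemma dot_comm: "dotF2 u v = dotF2 v u"
  unfolding dotF2_def by (simp only: mult.commute)

lemma bit_vec_double: "(u::bit^3) + e + e = u"
  by (simp add: vec_eq_iff)

lemma card_half:
  assumes "(s::bit^3) \<noteq> 0"
  shows "card {u::bit^3. dotF2 u s = 1} = 4"
proof -
  obtain j where j: "s $ j = 1" using assms by (metis vec_eq_iff zero_index bit_not_zero_iff)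
  define e :: "bit^3" where "e = axis j 1"
  have de: "dotF2 (u + e) s = dotF2 u s + 1" for u
    by (simp add: dot_comm[of _ s] dot_add e_def dot_axis j)
  define A0 where "A0 = {u::bit^3. dotF2 u s = 0}"
  define A1 where "A1 = {u::bit^3. dotF2 u s = 1}"
  have img: "(\<lambda>u. u + e) ` A0 = A1"
  proof
    show "(\<lambda>u. u + e) ` A0 \<subseteq> A1" unfolding A0_def A1_def using de by auto
    show "A1 \<subseteq> (\<lambda>u. u + e) ` A0"
    proof
      fix x assume "x \<in> A1"
      hence "x + e \<in> A0" unfolding A0_def A1_def using de by simp
      moreover have "x = x + e + e" by (simp add: bit_vec_double)
      ultimately show "x \<in> (\<lambda>u. u + e) ` A0" by blast
    qed
  qed
  have inj: "inj (\<lambda>u::bit^3. u + e)" by (simp add: inj_on_def)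
  have c01: "card A1 = card A0" using img inj card_image by (metis inj_on_subset subset_UNIV)
  have un: "A0 \<union> A1 = UNIV" unfolding A0_def A1_def using bit_not_zero_iff by blast
  have dj: "A0 \<inter> A1 = {}" unfolding A0_def A1_def by auto
  have cb: "CARD(bit) = 2"
  proof -
    have "(UNIV::bit set) = {0,1}" using bit_not_zero_iff by blast
    hence "CARD(bit) = card {0::bit,1}" by (simp only:)
    thus ?thesis by simp
  qed
  have "card A0 + card A1 = CARD(bit^3)" using card_Un_disjoint[of A0 A1] un dj by (simp add: finite)
  also have "\<dots> = 8" using cb by simp
  finally show ?thesis using c01 unfolding A1_def by simp
qed

lemma mult_val:
  assumes "u \<noteq> 0" "generatesF2 M"
  shows "(dotF2 u (sum_list M) = 1 \<longrightarrow> multiplicity (2::int) (lam M u) = 1) \<and>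
         (dotF2 u (sum_list M) = 0 \<longrightarrow> multiplicity (2::int) (lam M u) \<ge> 2)"
proof -
  define N where "N = NN M u"
  have Np: "int N \<noteq> 0" using NN_pos[OF assms] N_def by simp
  have m: "multiplicity (2::int) (lam M u) = Suc (multiplicity 2 (int N))"
    unfolding lam_NN N_def[symmetric] by (rule multiplicity_times_same) (use Np in auto)
  have d: "dotF2 u (sum_list M) = (if odd N then 1 else 0)" using dot_sum_list N_def by simp
  show ?thesis
  proof (cases "odd N")
    case True
    hence "\<not> (2::int) dvd int N" by simp
    hence "multiplicity 2 (int N) = 0" by (rule not_dvd_imp_multiplicity_0)
    thus ?thesis using m d True by simp
  next
    case False
    hence "(2::int) ^ 1 dvd int N" by simp
    moreover have "\<not> is_unit (2::int)" by simp
    ultimately have "multiplicity 2 (int N) \<ge> 1" using multiplicity_geI[OF Np] by blast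
    thus ?thesis using m d False by simp
  qed
qed

theorem mainTheorem17:
  fixes M :: "(bit^3) list"
  assumes "\<forall>v\<in>set M. v \<noteq> 0"
    and "generatesF2 M"
    and "sum_list M \<noteq> 0"
  shows "dseq M ! 0 = 1 \<and> dseq M ! 1 = 1 \<and> dseq M ! 2 = 1 \<and> dseq M ! 3 = 1 \<and>
         dseq M ! 4 > 1 \<and> dseq M ! 5 > 1 \<and> dseq M ! 6 > 1"
proof -
  define s where "s = sum_list M"
  define g where "g = (\<lambda>u. multiplicity (2::int) (lam M u))"
  define S where "S = UNIV - {0 :: bit^3}"
  define A where "A = image_mset g (mset_set S)"
  have dA: "dseq M = sorted_list_of_multiset A" unfolding dseq_def A_def g_def S_def ..
  have cS: "card S = 7" unfolding S_def by (simp add: card_Diff_singleton UNIV_bit numeral_3_eq_3)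
  have sA: "size A = 7" unfolding A_def using cS by simp
  have T: "{u \<in> S. g u \<le> 1} = {u. dotF2 u s = 1}"
  proof (intro set_eqI iffI)
    fix u assume "u \<in> {u \<in> S. g u \<le> 1}"
    hence "u \<noteq> 0" "g u \<le> 1" unfolding S_def by auto
    hence "\<not> dotF2 u s = 0" using mult_val[OF _ assms(2), of u] unfolding g_def s_def
      by auto
    thus "u \<in> {u. dotF2 u s = 1}" by simp
  next
    fix u assume "u \<in> {u. dotF2 u s = 1}"
    hence u1: "dotF2 u s = 1" by simp
    hence "u \<noteq> 0" by (auto simp: dot_comm[of 0] dot_zero)
    thus "u \<in> {u \<in> S. g u \<le> 1}" using mult_val[OF _ assms(2), of u] u1
      unfolding g_def s_def S_def by simp
  qed
  have g1: "\<forall>u \<in> {u. dotF2 u s = 1}. g u = 1"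
  proof
    fix u assume "u \<in> {u. dotF2 u s = 1}"
    hence u1: "dotF2 u s = 1" by simp
    hence "u \<noteq> 0" by (auto simp: dot_comm[of 0] dot_zero)
    thus "g u = 1" using mult_val[OF _ assms(2), of u] u1 unfolding g_def s_def by simp
  qed
  have "filter_mset (\<lambda>x. x \<le> 1) A = image_mset g (mset_set {u \<in> S. g u \<le> 1})"
    unfolding A_def by (simp add: filter_mset_image_mset)
  also have "\<dots> = image_mset (\<lambda>_. 1) (mset_set {u. dotF2 u s = 1})"
    unfolding T using g1 by (intro image_mset_cong) simp
  also have "\<dots> = replicate_mset 4 1"
    using card_half[of s] assms(3) s_def by (simp add: image_mset_const_eq)
  finally have "filter_mset (\<lambda>x. x \<le> 1) A = replicate_mset 4 1" .
  thus ?thesis unfolding dA using sort_lemma[OF sA] by blast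
qed

end
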